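(* Let $2\le m\le n$. Then $\operatorname{diam}(Y^0_{n,m})=\operatorname{diam}(Y^1_{n,m})=\lfloor n(m+1)/2\rfloor$.
   Context: The Yoke graph $Y_{n,m}$ has vertices the tuples $v=(v_0,\dots,v_{m+1})$ with $v_0,v_{m+1}\in\mathbb{Z}_n$, $v_1,\dots,v_m\in\{0,1\}$, $\sum v_i\equiv0\pmod n$; $u\sim v$ iff there is $0\le i\le m$ with $u_j=v_j$ for $j\notin\{i,i+1\}$ and either ($u_i=v_i+1$, $u_{i+1}=v_{i+1}-1$) or ($u_i=v_i-1$, $u_{i+1}=v_{i+1}+1$), buckets mod $n$. A vertex is identified with $(v_0,\dots,v_m)\in\{0,\dots,n-1\}\times\{0,1\}^m$ (with $v_0$ its least non-negative representative). Equip this set with the dominance order: $(v_0,\dots,v_m)\trianglelefteq(u_0,\dots,u_m)$ iff $\sum_{j=0}^{i}v_j\le\sum_{j=0}^{i}u_j$ for all $0\le i\le m$. Let $\hat0=(0,\dots,0)$, $\hat1=(n-1,1,\dots,1)$, $u_0=(n-1,1,0,\dots,0)$, $u_1=(0,0,1,\dots,1)$; let $I_0=[\hat0,u_0]$ and $I_1=[u_1,\hat1]$ be intervals in this order, and let $Y^0_{n,m}$, $Y^1_{n,m}$ be the subgraphs of $Y_{n,m}$ induced by $I_0$ and $I_1$ respectively (distances measured within these subgraphs). *)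

theory Defs
  imports "HOL-Library.Extended_Nat" "HOL-Number_Theory.Cong"
begin

text \<open>Vertices of the Yoke graph Y_{n,m}, identified with lists (v_0,...,v_m),
  v_0 in {0..n-1}, v_1..v_m in {0,1}. The last bucket v_{m+1} is determined
  by the sum condition.\<close>
definition yoke_vert :: "nat \<Rightarrow> nat \<Rightarrow> nat list \<Rightarrow> bool" where
  "yoke_vert n m v \<longleftrightarrow> length v = m + 1 \<and> v ! 0 < n \<and> (\<forall>i\<in>{1..m}. v ! i \<le> 1)"

definition yoke_ext :: "nat \<Rightarrow> nat \<Rightarrow> nat list \<Rightarrow> nat \<Rightarrow> int" where
  "yoke_ext n m v j = (if j \<le> m then int (v ! j) else (- (\<Sum>k\<le>m. int (v ! k))) mod int n)"

definition yoke_eq :: "nat \<Rightarrow> nat \<Rightarrow> nat \<Rightarrow> int \<Rightarrow> int \<Rightarrow> bool" where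
  "yoke_eq n m j a b \<longleftrightarrow> (if j = 0 \<or> j = m + 1 then [a = b] (mod int n) else a = b)"

definition yoke_adj :: "nat \<Rightarrow> nat \<Rightarrow> nat list \<Rightarrow> nat list \<Rightarrow> bool" where
  "yoke_adj n m u v \<longleftrightarrow> yoke_vert n m u \<and> yoke_vert n m v \<and>
     (\<exists>i\<le>m. (\<forall>j\<le>m+1. j \<noteq> i \<and> j \<noteq> i + 1 \<longrightarrow> yoke_eq n m j (yoke_ext n m u j) (yoke_ext n m v j)) \<and>
        ((yoke_eq n m i (yoke_ext n m u i) (yoke_ext n m v i + 1) \<and>
          yoke_eq n m (i+1) (yoke_ext n m u (i+1)) (yoke_ext n m v (i+1) - 1)) \<or>
         (yoke_eq n m i (yoke_ext n m u i) (yoke_ext n m v i - 1) \<and>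
          yoke_eq n m (i+1) (yoke_ext n m u (i+1)) (yoke_ext n m v (i+1) + 1))))"

definition dominated :: "nat \<Rightarrow> nat list \<Rightarrow> nat list \<Rightarrow> bool" where
  "dominated m v u \<longleftrightarrow> (\<forall>i\<le>m. (\<Sum>j\<le>i. v ! j) \<le> (\<Sum>j\<le>i. u ! j))"

definition dom_interval :: "nat \<Rightarrow> nat \<Rightarrow> nat list \<Rightarrow> nat list \<Rightarrow> nat list set" where
  "dom_interval n m a b = {v. yoke_vert n m v \<and> dominated m a v \<and> dominated m v b}"

definition yoke_bot :: "nat \<Rightarrow> nat list" where
  "yoke_bot m = replicate (m + 1) 0"
definition yoke_top :: "nat \<Rightarrow> nat \<Rightarrow> nat list" where
  "yoke_top n m = (n - 1) # replicate m 1"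
definition yoke_u0 :: "nat \<Rightarrow> nat \<Rightarrow> nat list" where
  "yoke_u0 n m = [n - 1, 1] @ replicate (m - 1) 0"
definition yoke_u1 :: "nat \<Rightarrow> nat list" where
  "yoke_u1 m = [0, 0] @ replicate (m - 1) 1"

definition yoke_I0 :: "nat \<Rightarrow> nat \<Rightarrow> nat list set" where
  "yoke_I0 n m = dom_interval n m (yoke_bot m) (yoke_u0 n m)"
definition yoke_I1 :: "nat \<Rightarrow> nat \<Rightarrow> nat list set" where
  "yoke_I1 n m = dom_interval n m (yoke_u1 m) (yoke_top n m)"

definition walk_in :: "'a set \<Rightarrow> ('a \<Rightarrow> 'a \<Rightarrow> bool) \<Rightarrow> 'a list \<Rightarrow> bool" where
  "walk_in S E xs \<longleftrightarrow> xs \<noteq> [] \<and> set xs \<subseteq> S \<and> (\<forall>i. Suc i < length xs \<longrightarrow> E (xs ! i) (xs ! Suc i))"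

text \<open>Graph distance within the induced subgraph (\<infinity> if unreachable).\<close>
definition induced_dist :: "'a set \<Rightarrow> ('a \<Rightarrow> 'a \<Rightarrow> bool) \<Rightarrow> 'a \<Rightarrow> 'a \<Rightarrow> enat" where
  "induced_dist S E x y = (INF xs \<in> {xs. walk_in S E xs \<and> hd xs = x \<and> last xs = y}. enat (length xs - 1))"

definition induced_diam :: "'a set \<Rightarrow> ('a \<Rightarrow> 'a \<Rightarrow> bool) \<Rightarrow> enat" where
  "induced_diam S E = (SUP x \<in> S. SUP y \<in> S. induced_dist S E x y)"

end

theory Submission
  imports Defs
begin

definition hh :: "nat list \<Rightarrow> nat \<Rightarrow> int" where
  "hh v i = (\<Sum>j\<le>i. int (v ! j))"

definition Sg :: "nat \<Rightarrow> nat list \<Rightarrow> int" where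
  "Sg m v = (\<Sum>i\<le>m. hh v i)"

definition L1 :: "nat \<Rightarrow> nat list \<Rightarrow> nat list \<Rightarrow> int" where
  "L1 m a b = (\<Sum>i\<le>m. \<bar>hh a i - hh b i\<bar>)"

lemma hh_0[simp]: "hh v 0 = int (v ! 0)"
  by (simp add: hh_def)

lemma hh_Suc: "hh v (Suc i) = hh v i + int (v ! Suc i)"
  by (simp add: hh_def)

lemma dominated_hh: "dominated m v u \<longleftrightarrow> (\<forall>i\<le>m. hh v i \<le> hh u i)"
  unfolding dominated_def hh_def
  by (metis (no_types, lifting) of_nat_le_iff of_nat_sum sum.cong)

lemma ext_m1: "yoke_ext n m v (Suc m) = (- hh v m) mod int n"
  by (simp add: yoke_ext_def hh_def)

lemma ext_le: "j \<le> m \<Longrightarrow> yoke_ext n m v j = int (v ! j)"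
  by (simp add: yoke_ext_def)

lemma hh_eq_list:
  assumes "length a = Suc m" "length b = Suc m" "\<forall>i\<le>m. hh a i = hh b i"
  shows "a = b"
proof (rule nth_equalityI)
  show "length a = length b" using assms by simp
  fix j assume j: "j < length a"
  show "a ! j = b ! j"
  proof (cases j)
    case 0 then show ?thesis using assms(3) by auto
  next
    case (Suc k)
    have "hh a (Suc k) = hh b (Suc k)" "hh a k = hh b k" using assms j Suc by auto
    then show ?thesis using Suc by (simp add: hh_Suc)
  qed
qed

inductive reachk :: "'a set \<Rightarrow> ('a \<Rightarrow> 'a \<Rightarrow> bool) \<Rightarrow> 'a \<Rightarrow> 'a \<Rightarrow> nat \<Rightarrow> bool" for S E where
  rrefl: "x \<in> S \<Longrightarrow> reachk S E x x 0"
| rstep: "x \<in> S \<Longrightarrow> E x y \<Longrightarrow> reachk S E y z k \<Longrightarrow> reachk S E x z (Suc k)"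

lemma reachk_in: "reachk S E x y k \<Longrightarrow> x \<in> S \<and> y \<in> S"
  by (induction rule: reachk.induct) auto

lemma reachk_trans: "reachk S E x y k \<Longrightarrow> reachk S E y z l \<Longrightarrow> reachk S E x z (k + l)"
  by (induction rule: reachk.induct) (auto intro: reachk.intros)

lemma reachk_one: "x \<in> S \<Longrightarrow> y \<in> S \<Longrightarrow> E x y \<Longrightarrow> reachk S E x y 1"
  using rstep[OF _ _ rrefl] by fastforce

lemma walk_Cons: "walk_in S E (x # y # zs) \<longleftrightarrow> x \<in> S \<and> E x y \<and> walk_in S E (y # zs)"
proof
  assume w: "walk_in S E (x # y # zs)"
  have "E x y" using w unfolding walk_in_def by (metis length_Cons nth_Cons_0 nth_Cons_Suc zero_less_Suc Suc_less_eq)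
  moreover have "walk_in S E (y # zs)" unfolding walk_in_def
  proof (intro conjI allI impI)
    show "y # zs \<noteq> []" by simp
    show "set (y # zs) \<subseteq> S" using w unfolding walk_in_def by auto
    fix i assume "Suc i < length (y # zs)"
    then have "Suc (Suc i) < length (x # y # zs)" by simp
    then have "E ((x # y # zs) ! Suc i) ((x # y # zs) ! Suc (Suc i))" using w unfolding walk_in_def by blast
    then show "E ((y # zs) ! i) ((y # zs) ! Suc i)" by simp
  qed
  ultimately show "x \<in> S \<and> E x y \<and> walk_in S E (y # zs)" using w unfolding walk_in_def by auto
next
  assume h: "x \<in> S \<and> E x y \<and> walk_in S E (y # zs)"
  show "walk_in S E (x # y # zs)" unfolding walk_in_def
  proof (intro conjI allI impI)
    show "x # y # zs \<noteq> []" by simp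
    show "set (x # y # zs) \<subseteq> S" using h unfolding walk_in_def by auto
    fix i assume i: "Suc i < length (x # y # zs)"
    show "E ((x # y # zs) ! i) ((x # y # zs) ! Suc i)"
    proof (cases i)
      case 0 then show ?thesis using h by simp
    next
      case (Suc k)
      then have "Suc k < length (y # zs)" using i by simp
      then show ?thesis using h Suc unfolding walk_in_def by simp
    qed
  qed
qed

lemma walk_single: "walk_in S E [x] \<longleftrightarrow> x \<in> S"
  by (simp add: walk_in_def)

lemma reachk_walk: "reachk S E x y k \<Longrightarrow> \<exists>xs. walk_in S E xs \<and> hd xs = x \<and> last xs = y \<and> length xs = Suc k"
proof (induction rule: reachk.induct)
  case (rrefl x) then show ?case by (intro exI[of _ "[x]"]) (simp add: walk_single)
next
  case (rstep x y z k)
  then obtain xs where xs: "walk_in S E xs" "hd xs = y" "last xs = z" "length xs = Suc k" by blast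
  then obtain ys where ys: "xs = y # ys" by (cases xs) auto
  have "walk_in S E (x # xs)" using rstep.hyps(1,2) xs(1) ys by (simp add: walk_Cons)
  then show ?case using xs ys by (intro exI[of _ "x # xs"]) auto
qed

lemma reachk_dist: "reachk S E x y k \<Longrightarrow> induced_dist S E x y \<le> enat k"
proof -
  assume r: "reachk S E x y k"
  obtain xs where xs: "walk_in S E xs" "hd xs = x" "last xs = y" "length xs = Suc k"
    using reachk_walk[OF r] by blast
  show ?thesis unfolding induced_dist_def
  proof (rule INF_lower2[of xs])
    show "xs \<in> {xs. walk_in S E xs \<and> hd xs = x \<and> last xs = y}" using xs by blast
    show "enat (length xs - 1) \<le> enat k" using xs(4) by simp
  qed
qed

lemma cong_small:
  fixes a b :: int
  assumes "[a = b] (mod int n)" "0 \<le> a" "a < int n" "0 \<le> b" "b < int n"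
  shows "a = b"
  using assms by (simp add: cong_def mod_pos_pos_trivial)

lemma cong_plus1:
  fixes a b :: int
  assumes "[a = b + 1] (mod int n)" "0 \<le> a" "a < int n" "0 \<le> b" "b < int n"
  shows "a = b + 1 \<or> (b = int n - 1 \<and> a = 0)"
proof (cases "b + 1 < int n")
  case True then show ?thesis using assms by (simp add: cong_def mod_pos_pos_trivial)
next
  case False
  then have "b + 1 = int n" using assms by simp
  then show ?thesis using assms by (simp add: cong_def mod_pos_pos_trivial)
qed

lemma cong_minus1:
  fixes a b :: int
  assumes "[a = b - 1] (mod int n)" "0 \<le> a" "a < int n" "0 \<le> b" "b < int n"
  shows "a = b - 1 \<or> (b = 0 \<and> a = int n - 1)"
proof (cases "b = 0")
  case False then show ?thesis using assms by (simp add: cong_def mod_pos_pos_trivial)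
next
  case True
  have n: "0 < int n" using assms by simp
  have "(b - 1) mod int n = int n - 1" using True zmod_minus1[OF n] by simp
  then show ?thesis using assms True by (simp add: cong_def mod_pos_pos_trivial)
qed

lemma yoke_eq_refl[simp]: "yoke_eq n m j a a"
  by (simp add: yoke_eq_def)

lemma yoke_eq_sym: "yoke_eq n m j a b \<Longrightarrow> yoke_eq n m j b a"
  by (auto simp: yoke_eq_def cong_sym)

lemma mod_p1: "(a::int) mod k = (b + 1) mod k \<Longrightarrow> b mod k = (a - 1) mod k"
  by (metis add_diff_cancel_right' mod_diff_left_eq)

lemma yoke_eq_p1: "yoke_eq n m j a (b + 1) \<Longrightarrow> yoke_eq n m j b (a - 1)"
proof -
  assume h: "yoke_eq n m j a (b + 1)"
  show ?thesis
  proof (cases "j = 0 \<or> j = m + 1")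
    case True
    then have "a mod int n = (b + 1) mod int n" using h by (simp add: yoke_eq_def cong_def)
    then have "b mod int n = (a - 1) mod int n" by (rule mod_p1)
    then show ?thesis using True by (simp add: yoke_eq_def cong_def)
  next
    case False
    then have "a = b + 1" using h by (simp add: yoke_eq_def)
    then show ?thesis using False by (simp add: yoke_eq_def)
  qed
qed

lemma mod_m1: "(a::int) mod k = (b - 1) mod k \<Longrightarrow> b mod k = (a + 1) mod k"
  by (metis diff_add_cancel mod_add_left_eq)

lemma yoke_eq_m1: "yoke_eq n m j a (b - 1) \<Longrightarrow> yoke_eq n m j b (a + 1)"
proof -
  assume h: "yoke_eq n m j a (b - 1)"
  show ?thesis
  proof (cases "j = 0 \<or> j = m + 1")
    case True
    then have "a mod int n = (b - 1) mod int n" using h by (simp add: yoke_eq_def cong_def)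
    then have "b mod int n = (a + 1) mod int n" by (rule mod_m1)
    then show ?thesis using True by (simp add: yoke_eq_def cong_def)
  next
    case False
    then have "a = b - 1" using h by (simp add: yoke_eq_def)
    then show ?thesis using False by (simp add: yoke_eq_def)
  qed
qed

lemma adj_sym: "yoke_adj n m u v \<Longrightarrow> yoke_adj n m v u"
proof -
  assume "yoke_adj n m u v"
  then obtain i where v: "yoke_vert n m u" "yoke_vert n m v" and i: "i \<le> m"
    and H: "\<forall>j\<le>m+1. j \<noteq> i \<and> j \<noteq> i + 1 \<longrightarrow> yoke_eq n m j (yoke_ext n m u j) (yoke_ext n m v j)"
    and D: "(yoke_eq n m i (yoke_ext n m u i) (yoke_ext n m v i + 1) \<and>
          yoke_eq n m (i+1) (yoke_ext n m u (i+1)) (yoke_ext n m v (i+1) - 1)) \<or>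
         (yoke_eq n m i (yoke_ext n m u i) (yoke_ext n m v i - 1) \<and>
          yoke_eq n m (i+1) (yoke_ext n m u (i+1)) (yoke_ext n m v (i+1) + 1))"
    unfolding yoke_adj_def by blast
  have H': "\<forall>j\<le>m+1. j \<noteq> i \<and> j \<noteq> i + 1 \<longrightarrow> yoke_eq n m j (yoke_ext n m v j) (yoke_ext n m u j)"
    using H yoke_eq_sym by blast
  have D': "(yoke_eq n m i (yoke_ext n m v i) (yoke_ext n m u i + 1) \<and>
          yoke_eq n m (i+1) (yoke_ext n m v (i+1)) (yoke_ext n m u (i+1) - 1)) \<or>
         (yoke_eq n m i (yoke_ext n m v i) (yoke_ext n m u i - 1) \<and>
          yoke_eq n m (i+1) (yoke_ext n m v (i+1)) (yoke_ext n m u (i+1) + 1))"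
    using D yoke_eq_p1 yoke_eq_m1 by blast
  show ?thesis unfolding yoke_adj_def using v i H' D' by blast
qed

lemma adj_shift:
  assumes "yoke_vert n m u" "yoke_vert n m v" "i < m"
    "\<forall>j\<le>m. j \<noteq> i \<and> j \<noteq> Suc i \<longrightarrow> v ! j = u ! j"
    "int (v ! i) = int (u ! i) - 1" "int (v ! Suc i) = int (u ! Suc i) + 1" "hh v m = hh u m"
  shows "yoke_adj n m u v"
  unfolding yoke_adj_def
proof (intro conjI exI[of _ i])
  show "yoke_vert n m u" "yoke_vert n m v" "i \<le> m" using assms by auto
  show "\<forall>j\<le>m + 1. j \<noteq> i \<and> j \<noteq> i + 1 \<longrightarrow> yoke_eq n m j (yoke_ext n m u j) (yoke_ext n m v j)"
  proof (intro allI impI)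
    fix j assume j: "j \<le> m + 1" "j \<noteq> i \<and> j \<noteq> i + 1"
    show "yoke_eq n m j (yoke_ext n m u j) (yoke_ext n m v j)"
    proof (cases "j \<le> m")
      case True then show ?thesis using assms(4) j by (simp add: ext_le)
    next
      case False then have "j = Suc m" using j by simp
      then show ?thesis using assms(7) by (simp add: ext_m1)
    qed
  qed
  show "yoke_eq n m i (yoke_ext n m u i) (yoke_ext n m v i + 1) \<and>
        yoke_eq n m (i + 1) (yoke_ext n m u (i + 1)) (yoke_ext n m v (i + 1) - 1) \<or>
        yoke_eq n m i (yoke_ext n m u i) (yoke_ext n m v i - 1) \<and>
        yoke_eq n m (i + 1) (yoke_ext n m u (i + 1)) (yoke_ext n m v (i + 1) + 1)"
  proof -
    have "yoke_ext n m u i = yoke_ext n m v i + 1" using assms(3,5) ext_le[of i m] by simp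
    moreover have "yoke_ext n m u (i+1) = yoke_ext n m v (i+1) - 1" using assms(3,6) ext_le[of "i+1" m] by simp
    ultimately show ?thesis by (metis yoke_eq_refl)
  qed
qed

lemma adj_end:
  assumes "yoke_vert n m u" "yoke_vert n m v" "1 \<le> m"
    "\<forall>j<m. v ! j = u ! j" "int (v ! m) = int (u ! m) - 1" "hh v m = hh u m - 1"
  shows "yoke_adj n m u v"
  unfolding yoke_adj_def
proof (intro conjI exI[of _ m])
  show "yoke_vert n m u" "yoke_vert n m v" "m \<le> m" using assms by auto
  show "\<forall>j\<le>m + 1. j \<noteq> m \<and> j \<noteq> m + 1 \<longrightarrow> yoke_eq n m j (yoke_ext n m u j) (yoke_ext n m v j)"
  proof (intro allI impI)
    fix j assume j: "j \<le> m + 1" "j \<noteq> m \<and> j \<noteq> m + 1"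
    then have "j < m" by simp
    then have "yoke_ext n m u j = yoke_ext n m v j" using assms(4) ext_le[of j m] by simp
    then show "yoke_eq n m j (yoke_ext n m u j) (yoke_ext n m v j)" by (metis yoke_eq_refl)
  qed
  have e1: "yoke_ext n m u (m + 1) = (- hh u m) mod int n" "yoke_ext n m v (m + 1) = (- hh v m) mod int n"
    using ext_m1 by simp_all
  have "[(- hh u m) mod int n = (- hh v m) mod int n - 1] (mod int n)"
    unfolding cong_def using assms(6) by (simp add: mod_diff_left_eq)
  then have "yoke_eq n m (m + 1) (yoke_ext n m u (m + 1)) (yoke_ext n m v (m + 1) - 1)"
    unfolding e1 yoke_eq_def by simp
  moreover have "yoke_ext n m u m = yoke_ext n m v m + 1" using assms(5) ext_le[of m m] by simp
  ultimately show "yoke_eq n m m (yoke_ext n m u m) (yoke_ext n m v m + 1) \<and>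
        yoke_eq n m (m + 1) (yoke_ext n m u (m + 1)) (yoke_ext n m v (m + 1) - 1) \<or>
        yoke_eq n m m (yoke_ext n m u m) (yoke_ext n m v m - 1) \<and>
        yoke_eq n m (m + 1) (yoke_ext n m u (m + 1)) (yoke_ext n m v (m + 1) + 1)" by (metis yoke_eq_refl)
qed

lemma vert_facts:
  assumes "yoke_vert n m u"
  shows "length u = Suc m" "u ! 0 < n" "\<And>j. 1 \<le> j \<Longrightarrow> j \<le> m \<Longrightarrow> u ! j \<le> 1"
  using assms by (auto simp: yoke_vert_def)

lemma adj_entries:
  assumes adj: "yoke_adj n m u v" and m: "1 \<le> m"
  shows "\<exists>i\<le>m. \<exists>c d. ((c = -1 \<and> d = 1) \<or> (c = 1 \<and> d = -1) \<or> (i = 0 \<and> c = int n - 1 \<and> d = 1)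
           \<or> (i = 0 \<and> c = -(int n - 1) \<and> d = -1)) \<and>
         (\<forall>l\<le>m. int (v ! l) = int (u ! l) + (if l = i then c else 0) + (if l = Suc i then d else 0))"
proof -
  have vu: "yoke_vert n m u" "yoke_vert n m v" using adj by (auto simp: yoke_adj_def)
  have u0: "u ! 0 < n" and v0: "v ! 0 < n" using vu by (auto simp: yoke_vert_def)
  obtain i where i: "i \<le> m"
    and H: "\<forall>j\<le>m+1. j \<noteq> i \<and> j \<noteq> i + 1 \<longrightarrow> yoke_eq n m j (yoke_ext n m u j) (yoke_ext n m v j)"
    and D: "(yoke_eq n m i (yoke_ext n m u i) (yoke_ext n m v i + 1) \<and>
          yoke_eq n m (i+1) (yoke_ext n m u (i+1)) (yoke_ext n m v (i+1) - 1)) \<or>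
         (yoke_eq n m i (yoke_ext n m u i) (yoke_ext n m v i - 1) \<and>
          yoke_eq n m (i+1) (yoke_ext n m u (i+1)) (yoke_ext n m v (i+1) + 1))"
    using adj unfolding yoke_adj_def by blast
  have E1: "int (v ! l) = int (u ! l)" if l: "l \<le> m" "l \<noteq> i" "l \<noteq> Suc i" for l
  proof -
    have e0: "yoke_eq n m l (yoke_ext n m u l) (yoke_ext n m v l)"
      using H l by simp
    have e: "yoke_eq n m l (int (u ! l)) (int (v ! l))"
      using e0 ext_le[of l m] l by simp
    show ?thesis
    proof (cases "l = 0")
      case True
      then have "[int (u ! 0) = int (v ! 0)] (mod int n)" using e by (simp add: yoke_eq_def)
      then show ?thesis using True cong_small u0 v0 by fastforce
    next
      case False then show ?thesis using e l by (simp add: yoke_eq_def)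
    qed
  qed
  have atS: "yoke_eq n m (i+1) (yoke_ext n m u (i+1)) x \<longleftrightarrow> int (u ! Suc i) = x" if "Suc i \<le> m" for x
    using that by (simp add: yoke_eq_def ext_le)
  have atI: "yoke_eq n m i (yoke_ext n m u i) x \<longleftrightarrow> int (u ! i) = x" if "i \<noteq> 0" for x
    using that i by (simp add: yoke_eq_def ext_le)
  have at0: "yoke_eq n m 0 (yoke_ext n m u 0) x \<longleftrightarrow> [int (u ! 0) = x] (mod int n)" for x
    by (simp add: yoke_eq_def ext_le)
  have ext_v: "yoke_ext n m v i = int (v ! i)" "yoke_ext n m v (i+1) = int (v ! Suc i)" if "Suc i \<le> m"
    using that ext_le by auto
  have ext_vi: "yoke_ext n m v i = int (v ! i)" using i ext_le by auto
  have a: "0 \<le> int (u!0)" "int (u!0) < int n" "0 \<le> int (v!0)" "int (v!0) < int n" using u0 v0 by auto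
  obtain c d where cd: "(c = -1 \<and> d = 1) \<or> (c = 1 \<and> d = -1) \<or> (i = 0 \<and> c = int n - 1 \<and> d = 1)
           \<or> (i = 0 \<and> c = -(int n - 1) \<and> d = -1)"
    and ci: "int (v ! i) = int (u ! i) + c"
    and di: "Suc i \<le> m \<Longrightarrow> int (v ! Suc i) = int (u ! Suc i) + d"
  proof (cases "yoke_eq n m i (yoke_ext n m u i) (yoke_ext n m v i + 1) \<and>
          yoke_eq n m (i+1) (yoke_ext n m u (i+1)) (yoke_ext n m v (i+1) - 1)")
    case True
    have dd: "Suc i \<le> m \<Longrightarrow> int (v ! Suc i) = int (u ! Suc i) + 1"
      using True atS ext_v by fastforce
    show ?thesis
    proof (cases "i = 0")
      case False
      then have "int (v ! i) = int (u ! i) + (-1)" using True atI ext_vi by simp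
      then show ?thesis using that dd by blast
    next
      case i0: True
      then have "[int (u ! 0) = int (v ! 0) + 1] (mod int n)" using True at0 ext_vi by simp
      then have "int (u ! 0) = int (v ! 0) + 1 \<or> (int (v ! 0) = int n - 1 \<and> int (u ! 0) = 0)"
        using cong_plus1[OF _ a(1) a(2) a(3) a(4)] by blast
      then show ?thesis
      proof
        assume "int (u ! 0) = int (v ! 0) + 1"
        then show ?thesis using that[of "-1" 1] dd i0 by simp
      next
        assume "int (v ! 0) = int n - 1 \<and> int (u ! 0) = 0"
        then show ?thesis using that[of "int n - 1" 1] dd i0 by simp
      qed
    qed
  next
    case False
    then have B: "yoke_eq n m i (yoke_ext n m u i) (yoke_ext n m v i - 1) \<and>
          yoke_eq n m (i+1) (yoke_ext n m u (i+1)) (yoke_ext n m v (i+1) + 1)" using D by blast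
    have dd: "Suc i \<le> m \<Longrightarrow> int (v ! Suc i) = int (u ! Suc i) + (-1)"
      using B atS ext_v by fastforce
    show ?thesis
    proof (cases "i = 0")
      case False
      then have "int (v ! i) = int (u ! i) + 1" using B atI ext_vi by simp
      then show ?thesis using that dd by blast
    next
      case i0: True
      then have "[int (u ! 0) = int (v ! 0) - 1] (mod int n)" using B at0 ext_vi by simp
      then have "int (u ! 0) = int (v ! 0) - 1 \<or> (int (v ! 0) = 0 \<and> int (u ! 0) = int n - 1)"
        using cong_minus1[OF _ a(1) a(2) a(3) a(4)] by blast
      then show ?thesis
      proof
        assume "int (u ! 0) = int (v ! 0) - 1"
        then show ?thesis using that[of 1 "-1"] dd i0 by simp
      next
        assume "int (v ! 0) = 0 \<and> int (u ! 0) = int n - 1"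
        then show ?thesis using that[of "-(int n - 1)" "-1"] dd i0 by simp
      qed
    qed
  qed
  have "\<forall>l\<le>m. int (v ! l) = int (u ! l) + (if l = i then c else 0) + (if l = Suc i then d else 0)"
  proof (intro allI impI)
    fix l assume l: "l \<le> m"
    show "int (v ! l) = int (u ! l) + (if l = i then c else 0) + (if l = Suc i then d else 0)"
      using E1[OF l] ci di l by auto
  qed
  then show ?thesis using i cd by blast
qed

lemma sum_ge_indicator:
  fixes c :: int
  shows "(\<Sum>j\<le>m. if i \<le> j then c else 0) = c * int (Suc m - i)"
proof -
  have "(\<Sum>j\<le>m. if i \<le> j then c else 0) = sum (\<lambda>_. c) {j\<in>{..m}. i \<le> j}"
    by (rule sum.inter_filter[symmetric]) simp
  also have "{j\<in>{..m}. i \<le> j} = {i..m}" by auto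
  also have "sum (\<lambda>_. c) {i..m} = c * int (Suc m - i)" by simp
  finally show ?thesis .
qed

lemma Sg_formula:
  assumes "\<forall>l\<le>m. int (v ! l) = int (u ! l) + (if l = i then c else 0) + (if l = Suc i then d else 0)"
  shows "Sg m v = Sg m u + c * int (Suc m - i) + d * int (m - i)"
proof -
  have hj: "hh v j = hh u j + (if i \<le> j then c else 0) + (if Suc i \<le> j then d else 0)" if j: "j \<le> m" for j
  proof -
    have "hh v j = (\<Sum>l\<le>j. int (u ! l) + (if l = i then c else 0) + (if l = Suc i then d else 0))"
      unfolding hh_def using assms j by (intro sum.cong) auto
    also have "\<dots> = hh u j + (\<Sum>l\<le>j. (if l = i then c else 0)) + (\<Sum>l\<le>j. (if l = Suc i then d else 0))"
      by (simp add: sum.distrib hh_def)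
    also have "\<dots> = hh u j + (if i \<le> j then c else 0) + (if Suc i \<le> j then d else 0)"
      by (simp add: sum.delta)
    finally show ?thesis .
  qed
  have "Sg m v = (\<Sum>j\<le>m. hh u j + (if i \<le> j then c else 0) + (if Suc i \<le> j then d else 0))"
    unfolding Sg_def by (intro sum.cong) (auto simp: hj)
  also have "\<dots> = Sg m u + (\<Sum>j\<le>m. if i \<le> j then c else 0) + (\<Sum>j\<le>m. if Suc i \<le> j then d else 0)"
    by (simp add: sum.distrib Sg_def)
  also have "\<dots> = Sg m u + c * int (Suc m - i) + d * int (Suc m - Suc i)"
    by (simp only: sum_ge_indicator)
  finally show ?thesis by simp
qed

lemma adj_Sg:
  assumes adj: "yoke_adj n m u v" and m: "1 \<le> m"
  shows "\<exists>f. \<bar>f\<bar> = 1 \<and> int (n * (m + 1)) dvd (Sg m v - Sg m u - f)"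
proof -
  obtain i c d where i: "i \<le> m" and cd: "(c = -1 \<and> d = 1) \<or> (c = 1 \<and> d = -1) \<or> (i = 0 \<and> c = int n - 1 \<and> d = 1)
           \<or> (i = 0 \<and> c = -(int n - 1) \<and> d = -1)"
    and e: "\<forall>l\<le>m. int (v ! l) = int (u ! l) + (if l = i then c else 0) + (if l = Suc i then d else 0)"
    using adj_entries[OF adj m] by blast
  have S: "Sg m v - Sg m u = c * int (Suc m - i) + d * int (m - i)" using Sg_formula[OF e] by simp
  have im: "int (Suc m - i) = int m + 1 - int i" "int (m - i) = int m - int i" using i by auto
  have N: "int (n * (m + 1)) = int n * (int m + 1)" by (simp add: algebra_simps)
  from cd show ?thesis
  proof (elim disjE conjE)
    assume "c = -1" "d = 1"
    then have "Sg m v - Sg m u = -1" using S im by (simp add: algebra_simps)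
    then show ?thesis by (intro exI[of _ "-1"]) simp
  next
    assume "c = 1" "d = -1"
    then have "Sg m v - Sg m u = 1" using S im by (simp add: algebra_simps)
    then show ?thesis by (intro exI[of _ "1"]) simp
  next
    assume "i = 0" "c = int n - 1" "d = 1"
    then have "Sg m v - Sg m u = (int n - 1) * (int m + 1 - 0) + 1 * (int m - 0)" using S im by simp
    then have "Sg m v - Sg m u - (-1) = int (n * (m + 1))" unfolding N by (simp add: algebra_simps)
    then show ?thesis by (intro exI[of _ "-1"]) simp
  next
    assume "i = 0" "c = -(int n - 1)" "d = -1"
    then have "Sg m v - Sg m u = (-(int n - 1)) * (int m + 1 - 0) + (-1) * (int m - 0)" using S im by simp
    then have "Sg m v - Sg m u - 1 = - int (n * (m + 1))" unfolding N by (simp add: algebra_simps)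
    then have "int (n * (m + 1)) dvd (Sg m v - Sg m u - 1)" by (metis dvd_minus_iff dvd_refl)
    then show ?thesis by (intro exI[of _ "1"]) simp
  qed
qed

lemma walk_Sg:
  assumes "walk_in S (yoke_adj n m) xs" "1 \<le> m"
  shows "\<exists>e. \<bar>e\<bar> \<le> int (length xs) - 1 \<and> int (n * (m + 1)) dvd (Sg m (last xs) - Sg m (hd xs) - e)"
  using assms(1)
proof (induction xs)
  case Nil then show ?case by (simp add: walk_in_def)
next
  case (Cons x xs)
  show ?case
  proof (cases xs)
    case Nil then show ?thesis by (intro exI[of _ 0]) simp
  next
    case (Cons y zs)
    then have adj: "yoke_adj n m x y" and w: "walk_in S (yoke_adj n m) xs"
      using Cons.prems \<open>xs = y # zs\<close> by (simp_all add: walk_Cons)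
    obtain e where e: "\<bar>e\<bar> \<le> int (length xs) - 1" "int (n * (m + 1)) dvd (Sg m (last xs) - Sg m (hd xs) - e)"
      using Cons.IH[OF w] by blast
    obtain f where f: "\<bar>f\<bar> = 1" "int (n * (m + 1)) dvd (Sg m y - Sg m x - f)"
      using adj_Sg[OF adj assms(2)] by blast
    have "int (n * (m + 1)) dvd ((Sg m (last xs) - Sg m (hd xs) - e) + (Sg m y - Sg m x - f))"
      using e(2) f(2) by (rule dvd_add)
    moreover have "hd xs = y" using Cons by simp
    ultimately have "int (n * (m + 1)) dvd (Sg m (last (x # xs)) - Sg m (hd (x # xs)) - (e + f))"
      using Cons by (simp add: algebra_simps)
    moreover have "\<bar>e + f\<bar> \<le> int (length (x # xs)) - 1" using e(1) f(1) by simp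
    ultimately show ?thesis by blast
  qed
qed

lemma hh_formula:
  assumes "\<forall>l\<le>m. int (v ! l) = int (u ! l) + (if l = i then c else 0) + (if l = Suc i then d else 0)"
    and j: "j \<le> m"
  shows "hh v j = hh u j + (if i \<le> j then c else 0) + (if Suc i \<le> j then d else 0)"
proof -
  have "hh v j = (\<Sum>l\<le>j. int (u ! l) + (if l = i then c else 0) + (if l = Suc i then d else 0))"
    unfolding hh_def using assms j by (intro sum.cong) auto
  also have "\<dots> = hh u j + (\<Sum>l\<le>j. (if l = i then c else 0)) + (\<Sum>l\<le>j. (if l = Suc i then d else 0))"
    by (simp add: sum.distrib hh_def)
  also have "\<dots> = hh u j + (if i \<le> j then c else 0) + (if Suc i \<le> j then d else 0)"
    by (simp add: sum.delta)
  finally show ?thesis .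
qed

lemma step:
  assumes va: "yoke_vert n m a" and vb: "yoke_vert n m b" and m: "1 \<le> m"
    and ex: "\<exists>i\<le>m. hh a i > hh b i"
  shows "\<exists>a' k. k \<le> m \<and> yoke_vert n m a' \<and> yoke_adj n m a a' \<and> hh b k < hh a k \<and>
     hh a' k = hh a k - 1 \<and> (\<forall>j\<le>m. j \<noteq> k \<longrightarrow> hh a' j = hh a j)"
proof -
  have la: "length a = Suc m" and a0: "a ! 0 < n" and abit: "\<And>j. 1 \<le> j \<Longrightarrow> j \<le> m \<Longrightarrow> a ! j \<le> 1"
    using va by (auto simp: yoke_vert_def)
  have bbit: "\<And>j. 1 \<le> j \<Longrightarrow> j \<le> m \<Longrightarrow> b ! j \<le> 1"
    using vb by (auto simp: yoke_vert_def)
  define Q where "Q = {k. k \<le> m \<and> hh a k > hh b k \<and> (k = 0 \<or> 1 \<le> a ! k)}"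
  have fQ: "finite Q" unfolding Q_def by (rule finite_subset[of _ "{..m}"]) auto
  define k1 where "k1 = (LEAST k. k \<le> m \<and> hh a k > hh b k)"
  have k1: "k1 \<le> m \<and> hh a k1 > hh b k1" unfolding k1_def using ex by (rule LeastI_ex)
  have "k1 \<in> Q"
  proof (cases k1)
    case 0 then show ?thesis using k1 unfolding Q_def by simp
  next
    case (Suc p)
    have "\<not> (p \<le> m \<and> hh a p > hh b p)"
      using not_less_Least[of p "\<lambda>k. k \<le> m \<and> hh a k > hh b k"] Suc unfolding k1_def by auto
    then have "hh a p \<le> hh b p" using Suc k1 by auto
    moreover have "hh a k1 = hh a p + int (a ! k1)" "hh b k1 = hh b p + int (b ! k1)"
      using Suc hh_Suc by auto
    ultimately have "int (a ! k1) > int (b ! k1)" using k1 by linarith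
    then have "1 \<le> a ! k1" by linarith
    then show ?thesis using k1 unfolding Q_def by simp
  qed
  then have QN: "Q \<noteq> {}" by blast
  define k where "k = Max Q"
  have kQ: "k \<in> Q" unfolding k_def using fQ QN by (rule Max_in)
  have kmax: "\<And>j. j \<in> Q \<Longrightarrow> j \<le> k" unfolding k_def using fQ by (rule Max_ge)
  have km: "k \<le> m" and kD: "hh a k > hh b k" using kQ unfolding Q_def by auto
  have ak: "1 \<le> a ! k"
  proof (cases "k = 0")
    case True
    then have "int (a ! 0) > int (b ! 0)" using kD by simp
    then show ?thesis using True by simp
  next
    case False then show ?thesis using kQ unfolding Q_def by auto
  qed
  have ak1: "a ! Suc k = 0" if kl: "k < m"
  proof (rule ccontr)
    assume "a ! Suc k \<noteq> 0"
    then have a1: "1 \<le> a ! Suc k" by simp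
    have "Suc k \<notin> Q" using kmax by fastforce
    then have "hh a (Suc k) \<le> hh b (Suc k)" using a1 kl unfolding Q_def by auto
    moreover have "hh a (Suc k) = hh a k + int (a ! Suc k)" "hh b (Suc k) = hh b k + int (b ! Suc k)"
      using hh_Suc by auto
    moreover have "b ! Suc k \<le> 1" using bbit kl by simp
    ultimately show False using kD a1 by linarith
  qed
  define a' where "a' = (if k < m then a[k := a ! k - 1, Suc k := 1] else a[k := a ! k - 1])"
  have la': "length a' = Suc m" unfolding a'_def using la by simp
  have ent: "\<forall>l\<le>m. int (a' ! l) = int (a ! l) + (if l = k then -1 else 0) + (if l = Suc k then 1 else 0)"
  proof (intro allI impI)
    fix l assume l: "l \<le> m"
    show "int (a' ! l) = int (a ! l) + (if l = k then -1 else 0) + (if l = Suc k then 1 else 0)"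
    proof (cases "k < m")
      case True
      then show ?thesis unfolding a'_def using l la ak ak1[OF True] km by (auto simp: nth_list_update)
    next
      case False
      then have "k = m" using km by simp
      then show ?thesis unfolding a'_def using l la ak by (auto simp: nth_list_update)
    qed
  qed
  have hh': "hh a' j = hh a j + (if k \<le> j then -1 else 0) + (if Suc k \<le> j then 1 else 0)" if "j \<le> m" for j
    using hh_formula[OF ent that] .
  have hk: "hh a' k = hh a k - 1" using hh'[OF km] by simp
  have hj: "\<forall>j\<le>m. j \<noteq> k \<longrightarrow> hh a' j = hh a j" using hh' by auto
  have va': "yoke_vert n m a'"
    unfolding yoke_vert_def
  proof (intro conjI ballI)
    show "length a' = m + 1" using la' by simp
    have "int (a' ! 0) \<le> int (a ! 0)" using ent by auto
    then show "a' ! 0 < n" using a0 by linarith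
    fix j assume j: "j \<in> {1..m}"
    show "a' ! j \<le> 1"
    proof (cases "j = Suc k")
      case True
      then have "k < m" using j by simp
      then have "a ! Suc k = 0" using ak1 by simp
      moreover have "int (a' ! Suc k) = int (a ! Suc k) + 1" using ent j True by auto
      ultimately show ?thesis using True by simp
    next
      case False
      then have "int (a' ! j) \<le> int (a ! j)" using ent j by auto
      then show ?thesis using abit[of j] j by simp
    qed
  qed
  have adj: "yoke_adj n m a a'"
  proof (cases "k < m")
    case True
    show ?thesis
    proof (rule adj_shift[OF va va' True])
      show "\<forall>j\<le>m. j \<noteq> k \<and> j \<noteq> Suc k \<longrightarrow> a' ! j = a ! j" using ent by auto
      show "int (a' ! k) = int (a ! k) - 1" using ent km by auto
      show "int (a' ! Suc k) = int (a ! Suc k) + 1" using ent True by auto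
      show "hh a' m = hh a m" using hj True by auto
    qed
  next
    case False
    then have km': "k = m" using km by simp
    show ?thesis
    proof (rule adj_end[OF va va' m])
      show "\<forall>j<m. a' ! j = a ! j"
      proof (intro allI impI)
        fix j assume "j < m"
        then have "int (a' ! j) = int (a ! j)" using ent km' by auto
        then show "a' ! j = a ! j" by simp
      qed
      show "int (a' ! m) = int (a ! m) - 1" using ent km' by auto
      show "hh a' m = hh a m - 1" using hk km' by simp
    qed
  qed
  show ?thesis using km va' adj kD hk hj by blast
qed

lemma sum_minus_delta:
  fixes f f' :: "nat \<Rightarrow> int"
  assumes "k \<le> m" "\<forall>j\<le>m. f' j = f j - (if j = k then 1 else 0)"
  shows "(\<Sum>j\<le>m. f' j) = (\<Sum>j\<le>m. f j) - 1"
proof -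
  have "(\<Sum>j\<le>m. f' j) = (\<Sum>j\<le>m. f j - (if j = k then 1 else 0))"
    using assms(2) by (intro sum.cong) auto
  also have "\<dots> = (\<Sum>j\<le>m. f j) - (\<Sum>j\<le>m. (if j = k then 1 else 0))"
    by (simp add: sum_subtractf)
  also have "\<dots> = (\<Sum>j\<le>m. f j) - 1" using assms(1) by (simp add: sum.delta)
  finally show ?thesis .
qed

lemma L1_nonneg: "0 \<le> L1 m a b"
  unfolding L1_def by (intro sum_nonneg) auto

lemma L1_sym: "L1 m a b = L1 m b a"
  unfolding L1_def by (intro sum.cong) auto

lemma L1_zero:
  assumes "L1 m a b = 0" "length a = Suc m" "length b = Suc m"
  shows "a = b"
proof -
  have "\<forall>i\<in>{..m}. \<bar>hh a i - hh b i\<bar> = 0"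
    using assms(1) unfolding L1_def by (subst sum_nonneg_eq_0_iff[symmetric]) auto
  then show ?thesis using hh_eq_list[OF assms(2,3)] by auto
qed

lemma L1_ge:
  assumes "\<forall>j\<le>m. hh b j \<le> hh a j"
  shows "L1 m a b = Sg m a - Sg m b"
proof -
  have "L1 m a b = (\<Sum>j\<le>m. hh a j - hh b j)"
    unfolding L1_def using assms by (intro sum.cong) auto
  then show ?thesis by (simp add: sum_subtractf Sg_def)
qed

lemma lip_le:
  fixes f :: "nat \<Rightarrow> int"
  assumes lip: "\<forall>j<m. \<bar>f (Suc j) - f j\<bar> \<le> 1"
  shows "j \<le> i \<Longrightarrow> i \<le> m \<Longrightarrow> \<bar>f i - f j\<bar> \<le> int (i - j)"
proof (induction i)
  case 0 then show ?case by simp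
next
  case (Suc i)
  show ?case
  proof (cases "j = Suc i")
    case True then show ?thesis by simp
  next
    case False
    then have "j \<le> i" using Suc.prems by simp
    then have "\<bar>f i - f j\<bar> \<le> int (i - j)" using Suc by simp
    moreover have "\<bar>f (Suc i) - f i\<bar> \<le> 1" using lip Suc.prems by simp
    ultimately show ?thesis using \<open>j \<le> i\<close> by linarith
  qed
qed

lemma lip_abs:
  fixes f :: "nat \<Rightarrow> int"
  assumes lip: "\<forall>j<m. \<bar>f (Suc j) - f j\<bar> \<le> 1" and "i \<le> m" "z \<le> m"
  shows "\<bar>f i - f z\<bar> \<le> \<bar>int i - int z\<bar>"
proof (cases "z \<le> i")
  case True then show ?thesis using lip_le[OF lip True assms(2)] by simp
next
  case False
  then have "\<bar>f z - f i\<bar> \<le> int (z - i)" using lip_le[OF lip _ assms(3)] by simp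
  then show ?thesis using False by (simp add: abs_minus_commute)
qed

lemma lip_ivt:
  fixes f :: "nat \<Rightarrow> int"
  assumes lip: "\<forall>j<m. \<bar>f (Suc j) - f j\<bar> \<le> 1"
  shows "p \<le> q \<Longrightarrow> q \<le> m \<Longrightarrow> f p \<le> 0 \<Longrightarrow> 0 \<le> f q \<Longrightarrow> \<exists>z. p \<le> z \<and> z \<le> q \<and> f z = 0"
proof (induction q)
  case 0 then show ?case by auto
next
  case (Suc q)
  show ?case
  proof (cases "f (Suc q) = 0")
    case True then show ?thesis using Suc.prems by auto
  next
    case False
    then have pos: "f (Suc q) > 0" using Suc.prems by simp
    then have "p \<noteq> Suc q" using Suc.prems by auto
    then have "p \<le> q" using Suc.prems by simp
    moreover have "\<bar>f (Suc q) - f q\<bar> \<le> 1" using lip Suc.prems by simp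
    ultimately obtain z where "p \<le> z \<and> z \<le> q \<and> f z = 0" using Suc pos by fastforce
    then show ?thesis by auto
  qed
qed

lemma sum_abs_dist:
  "z \<le> m \<Longrightarrow> 2 * (\<Sum>i\<le>m. \<bar>int i - int z\<bar>) \<le> int (m * (m + 1))"
proof (induction m arbitrary: z)
  case 0 then show ?case by simp
next
  case (Suc m)
  show ?case
  proof (cases "z \<le> m")
    case True
    have "(\<Sum>i\<le>Suc m. \<bar>int i - int z\<bar>) = (\<Sum>i\<le>m. \<bar>int i - int z\<bar>) + (int (Suc m) - int z)"
      using True by simp
    then show ?thesis using Suc.IH[OF True] True by (simp add: algebra_simps)
  next
    case False
    then have z: "z = Suc m" using Suc.prems by simp
    have "(\<Sum>i\<le>Suc m. \<bar>int i - int z\<bar>) = (\<Sum>i\<le>m. \<bar>int i - int z\<bar>)" using z by simp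
    also have "\<dots> = (\<Sum>i\<le>m. \<bar>int i - int m\<bar> + 1)"
      using z by (intro sum.cong) auto
    also have "\<dots> = (\<Sum>i\<le>m. \<bar>int i - int m\<bar>) + int (Suc m)"
      by (simp add: sum.distrib)
    finally show ?thesis using Suc.IH[of m] by (simp add: algebra_simps)
  qed
qed

locale yint =
  fixes n m :: nat and lo hi :: "nat list" and I :: "nat list set"
  assumes m2: "2 \<le> m" and mn: "m \<le> n"
    and vlo: "yoke_vert n m lo" and vhi: "yoke_vert n m hi"
    and dlh: "\<forall>i\<le>m. hh hi i - hh lo i = (if i = 0 then int n - 1 else int n)"
    and ahl: "yoke_adj n m hi lo"
    and I_def: "I = dom_interval n m lo hi"
begin

abbreviation "E \<equiv> yoke_adj n m"
abbreviation "N \<equiv> int (n * (m + 1))"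

lemma m1: "1 \<le> m" using m2 by simp

lemma memI: "x \<in> I \<longleftrightarrow> yoke_vert n m x \<and> (\<forall>i\<le>m. hh lo i \<le> hh x i) \<and> (\<forall>i\<le>m. hh x i \<le> hh hi i)"
  unfolding I_def dom_interval_def dominated_hh by simp

lemma lo_le_hi: "\<forall>i\<le>m. hh lo i \<le> hh hi i"
proof (intro allI impI)
  fix i assume "i \<le> m"
  then have "hh hi i - hh lo i = (if i = 0 then int n - 1 else int n)" using dlh by blast
  moreover have "n \<ge> 1" using m2 mn by simp
  ultimately show "hh lo i \<le> hh hi i" by (auto split: if_splits)
qed

lemma loI: "lo \<in> I" using memI vlo lo_le_hi by auto
lemma hiI: "hi \<in> I" using memI vhi lo_le_hi by auto

lemma SgHL: "Sg m hi - Sg m lo = N - 1"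
proof -
  have "Sg m hi - Sg m lo = (\<Sum>i\<le>m. hh hi i - hh lo i)" by (simp add: Sg_def sum_subtractf)
  also have "\<dots> = (\<Sum>i\<le>m. int n - (if i = 0 then 1 else 0))" using dlh by (intro sum.cong) auto
  also have "\<dots> = int (Suc m) * int n - 1" by (simp add: sum_subtractf sum.delta)
  finally show ?thesis by (simp add: algebra_simps)
qed

lemma step_I:
  assumes a: "a \<in> I" and b: "b \<in> I" and ex: "\<exists>i\<le>m. hh a i > hh b i"
  shows "\<exists>a'\<in>I. E a a' \<and> L1 m a' b = L1 m a b - 1 \<and> Sg m a' = Sg m a - 1"
proof -
  have va: "yoke_vert n m a" and vb: "yoke_vert n m b" using a b memI by auto
  obtain a' k where k: "k \<le> m" and va': "yoke_vert n m a'" and adj: "E a a'"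
    and kD: "hh b k < hh a k" and hk: "hh a' k = hh a k - 1" and hj: "\<forall>j\<le>m. j \<noteq> k \<longrightarrow> hh a' j = hh a j"
    using step[OF va vb m1 ex] by blast
  have "a' \<in> I" unfolding memI
  proof (intro conjI allI impI va')
    fix i assume i: "i \<le> m"
    show "hh lo i \<le> hh a' i"
    proof (cases "i = k")
      case True then show ?thesis using kD hk b memI i by force
    next
      case False then show ?thesis using hj a memI i by auto
    qed
    show "hh a' i \<le> hh hi i"
    proof (cases "i = k")
      case True then show ?thesis using hk a memI i by force
    next
      case False then show ?thesis using hj a memI i by auto
    qed
  qed
  moreover have "L1 m a' b = L1 m a b - 1"
    unfolding L1_def
  proof (rule sum_minus_delta[OF k])
    show "\<forall>j\<le>m. \<bar>hh a' j - hh b j\<bar> = \<bar>hh a j - hh b j\<bar> - (if j = k then 1 else 0)"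
      using hj hk kD by auto
  qed
  moreover have "Sg m a' = Sg m a - 1"
    unfolding Sg_def
  proof (rule sum_minus_delta[OF k])
    show "\<forall>j\<le>m. hh a' j = hh a j - (if j = k then 1 else 0)"
      using hj hk by auto
  qed
  ultimately show ?thesis using adj by blast
qed

lemma walkL1_aux:
  "\<forall>a b. a \<in> I \<longrightarrow> b \<in> I \<longrightarrow> nat (L1 m a b) = t \<longrightarrow> reachk I E a b t"
proof (induction t)
  case 0
  show ?case
  proof (intro allI impI)
    fix a b assume a: "a \<in> I" and b: "b \<in> I" and "nat (L1 m a b) = 0"
    then have "L1 m a b = 0" using L1_nonneg[of m a b] by simp
    moreover have "length a = Suc m" "length b = Suc m" using a b memI by (auto simp: yoke_vert_def)
    ultimately have "a = b" using L1_zero by blast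
    then show "reachk I E a b 0" using a by (simp add: rrefl)
  qed
next
  case (Suc t)
  show ?case
  proof (intro allI impI)
    fix a b assume a: "a \<in> I" and b: "b \<in> I" and t: "nat (L1 m a b) = Suc t"
    have "\<exists>i\<le>m. hh a i \<noteq> hh b i"
    proof (rule ccontr)
      assume "\<not> ?thesis"
      then have "L1 m a b = 0" unfolding L1_def by simp
      then show False using t by simp
    qed
    then obtain i where i: "i \<le> m" "hh a i \<noteq> hh b i" by blast
    show "reachk I E a b (Suc t)"
    proof (cases "hh a i > hh b i")
      case True
      then obtain a' where a': "a' \<in> I" "E a a'" "L1 m a' b = L1 m a b - 1"
        using step_I[OF a b] i by blast
      then have "nat (L1 m a' b) = t" using t by simp
      then have "reachk I E a' b t" using Suc.IH a' b by blast
      then show ?thesis using a a' by (blast intro: rstep)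
    next
      case False
      then have "hh b i > hh a i" using i by simp
      then obtain b' where b': "b' \<in> I" "E b b'" "L1 m b' a = L1 m b a - 1"
        using step_I[OF b a] i by blast
      then have "nat (L1 m a b') = t" using t L1_sym[of m a b] L1_sym[of m a b'] by simp
      then have "reachk I E a b' t" using Suc.IH a b' by blast
      moreover have "reachk I E b' b 1" using reachk_one[where E=E, OF b'(1) b adj_sym[OF b'(2)]] .
      ultimately show ?thesis using reachk_trans by fastforce
    qed
  qed
qed

lemma walkL1: "a \<in> I \<Longrightarrow> b \<in> I \<Longrightarrow> reachk I E a b (nat (L1 m a b))"
  using walkL1_aux by blast

lemma existS_aux:
  "\<forall>c. c \<in> I \<longrightarrow> Sg m lo \<le> s \<longrightarrow> nat (Sg m c - s) = t \<longrightarrow> s \<le> Sg m c \<longrightarrow> (\<exists>x\<in>I. Sg m x = s)"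
proof (induction t)
  case 0 then show ?case by force
next
  case (Suc t)
  show ?case
  proof (intro allI impI)
    fix c assume c: "c \<in> I" and s: "Sg m lo \<le> s" and t: "nat (Sg m c - s) = Suc t" and sc: "s \<le> Sg m c"
    have "\<exists>i\<le>m. hh c i > hh lo i"
    proof (rule ccontr)
      assume "\<not> ?thesis"
      then have "Sg m c \<le> Sg m lo" unfolding Sg_def by (intro sum_mono) auto
      then show False using s t by simp
    qed
    then obtain c' where c': "c' \<in> I" "Sg m c' = Sg m c - 1" using step_I[OF c loI] by blast
    then show "\<exists>x\<in>I. Sg m x = s" using Suc.IH s t by force
  qed
qed

lemma existS: "Sg m lo \<le> s \<Longrightarrow> s \<le> Sg m hi \<Longrightarrow> \<exists>x\<in>I. Sg m x = s"
  using existS_aux hiI by blast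

end

context yint begin

definition K :: nat where "K = n * (m + 1) div 2"

lemma K_props: "2 * int K \<le> N" "N \<le> 2 * int K + 1"
  unfolding K_def by linarith+

lemma route_hl:
  assumes a: "a \<in> I" and b: "b \<in> I"
  shows "\<exists>k. reachk I E a b k \<and> int k = N - (Sg m a - Sg m b)"
proof -
  have r1: "reachk I E a hi (nat (L1 m a hi))" using walkL1[OF a hiI] .
  have r2: "reachk I E hi lo 1" using reachk_one[where E=E, OF hiI loI ahl] .
  have r3: "reachk I E lo b (nat (L1 m lo b))" using walkL1[OF loI b] .
  have e1: "L1 m a hi = Sg m hi - Sg m a"
    using L1_sym[of m a hi] L1_ge[of m a hi] a memI by auto
  have e3: "L1 m lo b = Sg m b - Sg m lo"
    using L1_sym[of m lo b] L1_ge[of m lo b] b memI by auto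
  have "reachk I E a b (nat (L1 m a hi) + 1 + nat (L1 m lo b))"
    using reachk_trans[OF reachk_trans[OF r1 r2] r3] .
  moreover have "int (nat (L1 m a hi) + 1 + nat (L1 m lo b)) = N - (Sg m a - Sg m b)"
    using e1 e3 SgHL L1_nonneg[of m a hi] L1_nonneg[of m lo b] by simp
  ultimately show ?thesis by blast
qed

lemma route_lh:
  assumes a: "a \<in> I" and b: "b \<in> I"
  shows "\<exists>k. reachk I E a b k \<and> int k = N - (Sg m b - Sg m a)"
proof -
  have r1: "reachk I E a lo (nat (L1 m a lo))" using walkL1[OF a loI] .
  have r2: "reachk I E lo hi 1" using reachk_one[where E=E, OF loI hiI adj_sym[OF ahl]] .
  have r3: "reachk I E hi b (nat (L1 m hi b))" using walkL1[OF hiI b] .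
  have e1: "L1 m a lo = Sg m a - Sg m lo"
    using L1_ge[of m lo a] a memI by auto
  have e3: "L1 m hi b = Sg m hi - Sg m b"
    using L1_ge[of m b hi] b memI by auto
  have "reachk I E a b (nat (L1 m a lo) + 1 + nat (L1 m hi b))"
    using reachk_trans[OF reachk_trans[OF r1 r2] r3] .
  moreover have "int (nat (L1 m a lo) + 1 + nat (L1 m hi b)) = N - (Sg m b - Sg m a)"
    using e1 e3 SgHL L1_nonneg[of m a lo] L1_nonneg[of m hi b] by simp
  ultimately show ?thesis by blast
qed

lemma reach_upper:
  assumes a: "a \<in> I" and b: "b \<in> I"
  shows "\<exists>k. reachk I E a b k \<and> k \<le> K"
proof -
  define D where "D j = hh a j - hh b j" for j
  have va: "yoke_vert n m a" and vb: "yoke_vert n m b" using a b memI by auto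
  have lip: "\<forall>j<m. \<bar>D (Suc j) - D j\<bar> \<le> 1"
  proof (intro allI impI)
    fix j assume j: "j < m"
    have "a ! Suc j \<le> 1" "b ! Suc j \<le> 1" using va vb j by (auto simp: yoke_vert_def)
    moreover have "D (Suc j) - D j = int (a ! Suc j) - int (b ! Suc j)"
      unfolding D_def by (simp add: hh_Suc)
    ultimately show "\<bar>D (Suc j) - D j\<bar> \<le> 1" by simp
  qed
  have L1D: "L1 m a b = (\<Sum>j\<le>m. \<bar>D j\<bar>)" unfolding L1_def D_def by simp
  have r0: "reachk I E a b (nat (L1 m a b))" using walkL1[OF a b] .
  show ?thesis
  proof (cases "\<exists>z\<le>m. D z = 0")
    case True
    then obtain z where z: "z \<le> m" "D z = 0" by blast
    have "L1 m a b \<le> (\<Sum>i\<le>m. \<bar>int i - int z\<bar>)"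
      unfolding L1D
    proof (rule sum_mono)
      fix i assume "i \<in> {..m}"
      then show "\<bar>D i\<bar> \<le> \<bar>int i - int z\<bar>" using lip_abs[OF lip, of i z] z by simp
    qed
    then have "2 * L1 m a b \<le> int (m * (m + 1))" using sum_abs_dist[OF z(1)] by linarith
    also have "\<dots> \<le> N" using mn by (intro of_nat_mono mult_le_mono) auto
    finally have "L1 m a b \<le> int K" using K_props by linarith
    then have "nat (L1 m a b) \<le> K" by simp
    then show ?thesis using r0 by blast
  next
    case False
    have sgn: "(\<forall>j\<le>m. 0 \<le> D j) \<or> (\<forall>j\<le>m. D j \<le> 0)"
    proof (rule ccontr)
      assume "\<not> ?thesis"
      then have "\<not> (\<forall>j\<le>m. 0 \<le> D j)" "\<not> (\<forall>j\<le>m. D j \<le> 0)" by auto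
      then obtain p q where p: "p \<le> m" "\<not> 0 \<le> D p" and q: "q \<le> m" "\<not> D q \<le> 0"
        by blast
      then have p2: "D p < 0" and q2: "D q > 0" by auto
      show False
      proof (cases "p \<le> q")
        case True
        then obtain z where "p \<le> z \<and> z \<le> q \<and> D z = 0"
          using lip_ivt[OF lip True q(1)] p2 q2 by force
        then show False using False q by auto
      next
        case nle: False
        have lip': "\<forall>j<m. \<bar>(\<lambda>j. - D j) (Suc j) - (\<lambda>j. - D j) j\<bar> \<le> 1" using lip by (simp add: abs_minus_commute)
        obtain z where "q \<le> z \<and> z \<le> p \<and> - D z = 0"
          using lip_ivt[OF lip', of q p] nle p(1) p2 q2 by force
        then show False using False p by auto
      qed
    qed
    then show ?thesis
    proof
      assume pos: "\<forall>j\<le>m. 0 \<le> D j"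
      then have Ld: "L1 m a b = Sg m a - Sg m b" using L1_ge[of m b a] unfolding D_def by simp
      obtain k2 where k2: "reachk I E a b k2" "int k2 = N - (Sg m a - Sg m b)"
        using route_hl[OF a b] by blast
      show ?thesis
      proof (cases "2 * L1 m a b \<le> N")
        case True
        then have "nat (L1 m a b) \<le> K" using K_props by linarith
        then show ?thesis using r0 by blast
      next
        case False
        then have "int k2 \<le> int K" using k2(2) Ld K_props by linarith
        then show ?thesis using k2(1) by auto
      qed
    next
      assume neg: "\<forall>j\<le>m. D j \<le> 0"
      then have Ld: "L1 m a b = Sg m b - Sg m a"
        using L1_ge[of m a b] L1_sym[of m a b] unfolding D_def by simp
      obtain k2 where k2: "reachk I E a b k2" "int k2 = N - (Sg m b - Sg m a)"
        using route_lh[OF a b] by blast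
      show ?thesis
      proof (cases "2 * L1 m a b \<le> N")
        case True
        then have "nat (L1 m a b) \<le> K" using K_props by linarith
        then show ?thesis using r0 by blast
      next
        case False
        then have "int k2 \<le> int K" using k2(2) Ld K_props by linarith
        then show ?thesis using k2(1) by auto
      qed
    qed
  qed
qed

lemma dist_upper:
  assumes "a \<in> I" "b \<in> I"
  shows "induced_dist I E a b \<le> enat K"
proof -
  obtain k where "reachk I E a b k" "k \<le> K" using reach_upper[OF assms] by blast
  then show ?thesis using reachk_dist[of I E a b k] by (meson enat_ord_simps(1) order_trans)
qed

lemma dist_lower:
  assumes y: "y \<in> I" "Sg m y = Sg m lo + int K"
  shows "enat K \<le> induced_dist I E lo y"
  unfolding induced_dist_def
proof (rule INF_greatest)
  fix xs assume "xs \<in> {xs. walk_in I E xs \<and> hd xs = lo \<and> last xs = y}"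
  then have w: "walk_in I E xs" "hd xs = lo" "last xs = y" by auto
  obtain e where e: "\<bar>e\<bar> \<le> int (length xs) - 1" "N dvd (Sg m (last xs) - Sg m (hd xs) - e)"
    using walk_Sg[OF w(1) m1] by blast
  have dv: "N dvd (int K - e)" using e(2) w y by simp
  have ne: "xs \<noteq> []" using w(1) by (simp add: walk_in_def)
  show "enat K \<le> enat (length xs - 1)"
  proof (rule ccontr)
    assume "\<not> ?thesis"
    then have "length xs - 1 < K" by simp
    then have "int (length xs) - 1 < int K" using ne by (cases xs) auto
    then have "\<bar>e\<bar> < int K" using e(1) by linarith
    then have pos: "0 < int K - e" by linarith
    have "N \<le> int K - e" using zdvd_imp_le[OF dv pos] .
    moreover have "int K - e < 2 * int K" using \<open>\<bar>e\<bar> < int K\<close> by linarith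
    ultimately show False using K_props by linarith
  qed
qed

lemma diam: "induced_diam I E = enat K"
proof (rule antisym)
  show "induced_diam I E \<le> enat K"
    unfolding induced_diam_def
    by (intro SUP_least) (rule dist_upper)
next
  have "Sg m lo \<le> Sg m lo + int K" by simp
  moreover have "Sg m lo + int K \<le> Sg m hi"
  proof -
    have "2 * 1 \<le> n * (m + 1)" using m2 mn by (intro mult_le_mono) auto
    then have "N \<ge> 2" by linarith
    then show ?thesis using SgHL K_props by linarith
  qed
  ultimately obtain y where y: "y \<in> I" "Sg m y = Sg m lo + int K" using existS by blast
  have "enat K \<le> induced_dist I E lo y" using dist_lower[OF y] .
  also have "\<dots> \<le> (SUP y\<in>I. induced_dist I E lo y)" by (rule SUP_upper[OF y(1)])
  also have "\<dots> \<le> induced_diam I E" unfolding induced_diam_def by (rule SUP_upper[OF loI])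
  finally show "enat K \<le> induced_diam I E" .
qed

end

lemma adj_wrap:
  assumes vu: "yoke_vert n m u" and vv: "yoke_vert n m v" and m: "1 \<le> m" and n: "1 \<le> n"
    and u0: "u ! 0 = n - 1" and v0: "v ! 0 = 0" and u1: "u ! 1 = 1" and v1: "v ! 1 = 0"
    and eq: "\<forall>j. 2 \<le> j \<and> j \<le> m \<longrightarrow> u ! j = v ! j"
  shows "yoke_adj n m u v"
  unfolding yoke_adj_def
proof (intro conjI exI[of _ 0])
  show "yoke_vert n m u" "yoke_vert n m v" "0 \<le> m" using vu vv by auto
  have ent: "\<forall>l\<le>m. int (u ! l) = int (v ! l) + (if l = 0 then int n - 1 else 0) + (if l = Suc 0 then 1 else 0)"
  proof (intro allI impI)
    fix l assume l: "l \<le> m"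
    show "int (u ! l) = int (v ! l) + (if l = 0 then int n - 1 else 0) + (if l = Suc 0 then 1 else 0)"
      using u0 v0 u1 v1 eq l n by (cases "l = 0"; cases "l = 1") auto
  qed
  have hm: "hh u m = hh v m + int n" using hh_formula[OF ent, of m] m by simp
  show "\<forall>j\<le>m + 1. j \<noteq> 0 \<and> j \<noteq> 0 + 1 \<longrightarrow> yoke_eq n m j (yoke_ext n m u j) (yoke_ext n m v j)"
  proof (intro allI impI)
    fix j assume j: "j \<le> m + 1" "j \<noteq> 0 \<and> j \<noteq> 0 + 1"
    show "yoke_eq n m j (yoke_ext n m u j) (yoke_ext n m v j)"
    proof (cases "j \<le> m")
      case True
      then have "yoke_ext n m u j = yoke_ext n m v j" using eq j ext_le[of j m] by simp
      then show ?thesis by (metis yoke_eq_refl)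
    next
      case False
      then have jm: "j = m + 1" using j by simp
      have "(- hh u m) mod int n = (- hh v m + (-1) * int n) mod int n" using hm by simp
      also have "\<dots> = (- hh v m) mod int n" by (rule mod_mult_self1)
      finally have "yoke_ext n m u j = yoke_ext n m v j" using jm ext_m1 by simp
      then show ?thesis by (metis yoke_eq_refl)
    qed
  qed
  have "[yoke_ext n m u 0 = yoke_ext n m v 0 - 1] (mod int n)"
  proof -
    have "yoke_ext n m u 0 = int n - 1" "yoke_ext n m v 0 = 0" using u0 v0 n ext_le[of 0 m] by auto
    moreover have "[int n - 1 = 0 - 1] (mod int n)" by (simp add: cong_def)
    ultimately show ?thesis by simp
  qed
  then have "yoke_eq n m 0 (yoke_ext n m u 0) (yoke_ext n m v 0 - 1)" by (simp add: yoke_eq_def)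
  moreover have "yoke_ext n m u (0 + 1) = yoke_ext n m v (0 + 1) + 1" using u1 v1 m ext_le[of 1 m] by simp
  ultimately show "yoke_eq n m 0 (yoke_ext n m u 0) (yoke_ext n m v 0 + 1) \<and>
        yoke_eq n m (0 + 1) (yoke_ext n m u (0 + 1)) (yoke_ext n m v (0 + 1) - 1) \<or>
        yoke_eq n m 0 (yoke_ext n m u 0) (yoke_ext n m v 0 - 1) \<and>
        yoke_eq n m (0 + 1) (yoke_ext n m u (0 + 1)) (yoke_ext n m v (0 + 1) + 1)"
    by (metis yoke_eq_refl)
qed

lemma nth_bot: "j \<le> m \<Longrightarrow> yoke_bot m ! j = 0"
  unfolding yoke_bot_def by (rule nth_replicate) simp

lemma nth_u0: "1 \<le> m \<Longrightarrow> j \<le> m \<Longrightarrow> yoke_u0 n m ! j = (if j = 0 then n - 1 else if j = 1 then 1 else 0)"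
  by (auto simp: yoke_u0_def nth_append)

lemma nth_u1: "1 \<le> m \<Longrightarrow> j \<le> m \<Longrightarrow> yoke_u1 m ! j = (if j \<le> 1 then 0 else 1)"
proof -
  assume m: "1 \<le> m" and j: "j \<le> m"
  show ?thesis
  proof (cases "j \<le> 1")
    case True then show ?thesis by (cases j) (auto simp: yoke_u1_def)
  next
    case False then show ?thesis using m j by (auto simp: yoke_u1_def nth_append)
  qed
qed

lemma nth_top: "j \<le> m \<Longrightarrow> yoke_top n m ! j = (if j = 0 then n - 1 else 1)"
  by (cases j) (auto simp: yoke_top_def)

lemma len_lists: "1 \<le> m \<Longrightarrow> length (yoke_bot m) = Suc m \<and> length (yoke_u0 n m) = Suc m \<and>
    length (yoke_u1 m) = Suc m \<and> length (yoke_top n m) = Suc m"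
  by (auto simp: yoke_bot_def yoke_u0_def yoke_u1_def yoke_top_def)

lemma hh_bot: "i \<le> m \<Longrightarrow> hh (yoke_bot m) i = 0"
  unfolding hh_def by (auto simp: nth_bot)

lemma hh_u0: "1 \<le> m \<Longrightarrow> 1 \<le> n \<Longrightarrow> i \<le> m \<Longrightarrow> hh (yoke_u0 n m) i = (if i = 0 then int n - 1 else int n)"
proof (induction i)
  case 0 then show ?case by (simp add: nth_u0)
next
  case (Suc i) then show ?case by (simp add: hh_Suc nth_u0)
qed

lemma hh_u1: "1 \<le> m \<Longrightarrow> i \<le> m \<Longrightarrow> hh (yoke_u1 m) i = (if i = 0 then 0 else int i - 1)"
proof (induction i)
  case 0 then show ?case by (simp add: nth_u1)
next
  case (Suc i) then show ?case by (simp add: hh_Suc nth_u1)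
qed

lemma hh_top: "1 \<le> n \<Longrightarrow> i \<le> m \<Longrightarrow> hh (yoke_top n m) i = int n - 1 + int i"
proof (induction i)
  case 0 then show ?case by (simp add: nth_top)
next
  case (Suc i) then show ?case by (simp add: hh_Suc nth_top)
qed

lemma yint_I0: "2 \<le> m \<Longrightarrow> m \<le> n \<Longrightarrow> yint n m (yoke_bot m) (yoke_u0 n m) (yoke_I0 n m)"
proof -
  assume m: "2 \<le> m" and mn: "m \<le> n"
  have m1: "1 \<le> m" and n1: "1 \<le> n" using m mn by auto
  have vb: "yoke_vert n m (yoke_bot m)" using len_lists[OF m1] n1 by (auto simp: yoke_vert_def nth_bot)
  have vu: "yoke_vert n m (yoke_u0 n m)" using len_lists[OF m1] n1 m1 by (auto simp: yoke_vert_def nth_u0)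
  show ?thesis
  proof
    show "2 \<le> m" "m \<le> n" using m mn by auto
    show "yoke_vert n m (yoke_bot m)" "yoke_vert n m (yoke_u0 n m)" using vb vu by auto
    show "\<forall>i\<le>m. hh (yoke_u0 n m) i - hh (yoke_bot m) i = (if i = 0 then int n - 1 else int n)"
      using hh_u0[OF m1 n1] hh_bot by auto
    show "yoke_adj n m (yoke_u0 n m) (yoke_bot m)"
      by (rule adj_wrap[OF vu vb m1 n1]) (use m1 in \<open>auto simp: nth_u0 nth_bot\<close>)
    show "yoke_I0 n m = dom_interval n m (yoke_bot m) (yoke_u0 n m)" by (simp add: yoke_I0_def)
  qed
qed

lemma yint_I1: "2 \<le> m \<Longrightarrow> m \<le> n \<Longrightarrow> yint n m (yoke_u1 m) (yoke_top n m) (yoke_I1 n m)"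
proof -
  assume m: "2 \<le> m" and mn: "m \<le> n"
  have m1: "1 \<le> m" and n1: "1 \<le> n" using m mn by auto
  have vb: "yoke_vert n m (yoke_u1 m)" using len_lists[OF m1] n1 m1 nth_u1[OF m1, of 0] by (auto simp: yoke_vert_def nth_u1)
  have vu: "yoke_vert n m (yoke_top n m)" using len_lists[OF m1] n1 m1 by (auto simp: yoke_vert_def nth_top)
  show ?thesis
  proof
    show "2 \<le> m" "m \<le> n" using m mn by auto
    show "yoke_vert n m (yoke_u1 m)" "yoke_vert n m (yoke_top n m)" using vb vu by auto
    show "\<forall>i\<le>m. hh (yoke_top n m) i - hh (yoke_u1 m) i = (if i = 0 then int n - 1 else int n)"
      using hh_top[OF n1] hh_u1[OF m1] by auto
    show "yoke_adj n m (yoke_top n m) (yoke_u1 m)"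
      by (rule adj_wrap[OF vu vb m1 n1]) (use m1 in \<open>auto simp: nth_u1 nth_top\<close>)
    show "yoke_I1 n m = dom_interval n m (yoke_u1 m) (yoke_top n m)" by (simp add: yoke_I1_def)
  qed
qed

theorem lemma5p14:
  fixes n m :: nat
  assumes "2 \<le> m" and "m \<le> n"
  shows "induced_diam (yoke_I0 n m) (yoke_adj n m) = enat (n * (m + 1) div 2)
       \<and> induced_diam (yoke_I1 n m) (yoke_adj n m) = enat (n * (m + 1) div 2)"
proof -
  interpret A0: yint n m "yoke_bot m" "yoke_u0 n m" "yoke_I0 n m" using yint_I0[OF assms] .
  interpret A1: yint n m "yoke_u1 m" "yoke_top n m" "yoke_I1 n m" using yint_I1[OF assms] .
  show ?thesis using A0.diam A1.diam by (simp add: A0.K_def A1.K_def)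
qed


end
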